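(* Let $\pi$ be a distribution on $\mathbb{R}^d$ with positive definite covariance $\Sigma$, precision $Q=\Sigma^{-1}=(Q_{ij})_{i,j=1}^s$ in block form. For $w\in\Delta_s:=\{w\in\mathbb{R}^s: w_i>0,\ 1-w_1-\dots-w_s>0\}$ define $$f(w)=\lambda_{\min}(D^{\rm ext}_wQ^{\rm ext}),\quad Q^{\rm ext}=\mathrm{diag}(Q,1),\quad D^{\rm ext}_w=\mathrm{diag}\Big(D_w,\ 1-\sum_{i=1}^sw_i\Big),$$ where $D_w=\mathrm{diag}(w_1(Q_{11})^{-1},\dots,w_s(Q_{ss})^{-1})$. Let $w^\star\in\Delta_s$ be a maximiser of $f$ over $\Delta_s$. Then the pseudo-optimal weights are $p^{\mathrm{opt}}_j=w^\star_j/(w^\star_1+\dots+w^\star_s)$, $j=1,\dots,s$, and $$\mathrm{PG}(p^{\mathrm{opt}})=\frac{f(w^\star)}{w^\star_1+\dots+w^\star_s}.$$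
   Context: For a probability vector $p$ with positive entries, the pseudo-spectral gap is $\mathrm{PG}(p)=\lambda_{\min}(D_pQ)$ with $D_p=\mathrm{diag}(p_1(Q_{11})^{-1},\dots,p_s(Q_{ss})^{-1})$ (block diagonal, $d\times d$), and the pseudo-optimal weights $p^{\mathrm{opt}}$ are the (unique) maximiser of $\mathrm{PG}$ over probability vectors with positive entries. $\lambda_{\min}$ denotes the smallest eigenvalue. *)

theory Defs
  imports "HOL-Analysis.Analysis"
begin

text \<open>Matrices are indexed by a finite type 'n (so d = CARD('n)); the block
structure is given by a surjective map blk :: 'n \<Rightarrow> 'b assigning to each
coordinate its block (s = CARD('b)).\<close>

definition diag_mat :: "('n::finite \<Rightarrow> real) \<Rightarrow> real^'n^'n" where
  "diag_mat v = (\<chi> i j. if i = j then v i else 0)"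

definition block_diag_part :: "('n::finite \<Rightarrow> 'b) \<Rightarrow> real^'n^'n \<Rightarrow> real^'n^'n" where
  "block_diag_part blk Q = (\<chi> j k. if blk j = blk k then Q $ j $ k else 0)"

text \<open>D_w = diag(w_1 (Q_11)^{-1}, ..., w_s (Q_ss)^{-1}); the inverse of the
block-diagonal part is the block-diagonal matrix of the block inverses.\<close>
definition Dmat :: "('n::finite \<Rightarrow> 'b) \<Rightarrow> real^'n^'n \<Rightarrow> ('b \<Rightarrow> real) \<Rightarrow> real^'n^'n" where
  "Dmat blk Q w = diag_mat (\<lambda>j. w (blk j)) ** matrix_inv (block_diag_part blk Q)"

definition lambda_min :: "real^'n^'n \<Rightarrow> real" where
  "lambda_min A = Min {l. \<exists>v. v \<noteq> 0 \<and> A *v v = l *\<^sub>R v}"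

definition PG :: "('n::finite \<Rightarrow> 'b) \<Rightarrow> real^'n^'n \<Rightarrow> ('b \<Rightarrow> real) \<Rightarrow> real" where
  "PG blk Q p = lambda_min (Dmat blk Q p ** Q)"

text \<open>Extended matrices on index type 'n option (None is the extra coordinate).\<close>
definition Qext :: "real^'n^'n \<Rightarrow> real^('n::finite option)^('n option)" where
  "Qext Q = (\<chi> i j. case (i, j) of (Some a, Some b) \<Rightarrow> Q $ a $ b
                                   | (None, None) \<Rightarrow> 1 | _ \<Rightarrow> 0)"

definition Dext :: "('n::finite \<Rightarrow> 'b::finite) \<Rightarrow> real^'n^'n \<Rightarrow> ('b \<Rightarrow> real)
                     \<Rightarrow> real^('n option)^('n option)" where
  "Dext blk Q w = (\<chi> i j. case (i, j) of (Some a, Some b) \<Rightarrow> Dmat blk Q w $ a $ b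
                                   | (None, None) \<Rightarrow> 1 - (\<Sum>i\<in>UNIV. w i) | _ \<Rightarrow> 0)"

definition fext :: "('n::finite \<Rightarrow> 'b::finite) \<Rightarrow> real^'n^'n \<Rightarrow> ('b \<Rightarrow> real) \<Rightarrow> real" where
  "fext blk Q w = lambda_min (Dext blk Q w ** Qext Q)"

definition open_simplex :: "('b::finite \<Rightarrow> real) set" where
  "open_simplex = {w. (\<forall>i. w i > 0) \<and> 1 - (\<Sum>i\<in>UNIV. w i) > 0}"

definition pos_prob_vectors :: "('b::finite \<Rightarrow> real) set" where
  "pos_prob_vectors = {p. (\<forall>i. p i > 0) \<and> (\<Sum>i\<in>UNIV. p i) = 1}"

end

theory Submission
  imports Defs
begin

lemma inv_props:
  fixes A :: "real^'n::finite^'n"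
  assumes "invertible A"
  shows "A ** matrix_inv A = mat 1" "matrix_inv A ** A = mat 1"
proof -
  have "\<exists>A'. A ** A' = mat 1 \<and> A' ** A = mat 1" using assms unfolding invertible_def by blast
  from someI_ex[OF this] show "A ** matrix_inv A = mat 1" "matrix_inv A ** A = mat 1"
    unfolding matrix_inv_def by auto
qed

lemma pd_invertible:
  fixes A :: "real^'n::finite^'n"
  assumes "\<And>x. x \<noteq> 0 \<Longrightarrow> x \<bullet> (A *v x) > 0"
  shows "invertible A"
proof -
  have "\<forall>x. A *v x = 0 \<longrightarrow> x = 0"
    using assms by (metis inner_zero_right less_irrefl)
  then show ?thesis using matrix_left_invertible_ker invertible_left_inverse by blast
qed

lemma sym_dot:
  fixes A :: "real^'n::finite^'n"
  assumes "transpose A = A"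
  shows "x \<bullet> (A *v y) = y \<bullet> (A *v x)"
proof -
  have "x \<bullet> (A *v y) = (x v* A) \<bullet> y" by (simp add: dot_lmul_matrix)
  also have "x v* A = transpose A *v x" by simp
  finally show ?thesis using assms by (simp add: inner_commute)
qed

lemma Q_props:
  fixes Sigma :: "real^'n::finite^'n"
  assumes sym: "transpose Sigma = Sigma"
    and pd: "\<And>x. x \<noteq> 0 \<Longrightarrow> x \<bullet> (Sigma *v x) > 0"
  shows "transpose (matrix_inv Sigma) = matrix_inv Sigma"
    "\<And>x. x \<noteq> 0 \<Longrightarrow> x \<bullet> (matrix_inv Sigma *v x) > 0"
proof -
  let ?Q = "matrix_inv Sigma"
  have inv: "invertible Sigma" using pd_invertible pd by blast
  note ip = inv_props[OF inv]
  have "transpose (Sigma ** ?Q) = mat 1" using ip by simp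
  then have tq: "transpose ?Q ** Sigma = mat 1" by (simp add: matrix_transpose_mul sym)
  have "transpose ?Q = transpose ?Q ** (Sigma ** ?Q)" using ip by simp
  also have "\<dots> = ?Q" by (simp add: matrix_mul_assoc tq)
  finally show "transpose ?Q = ?Q" .
  fix x :: "real^'n" assume "x \<noteq> 0"
  have y0: "?Q *v x \<noteq> 0"
    by (metis \<open>x \<noteq> 0\<close> ip(1) matrix_vector_mul_assoc matrix_vector_mul_lid matrix_vector_mult_0_right)
  have "x = Sigma *v (?Q *v x)" by (simp add: matrix_vector_mul_assoc ip)
  then have "x \<bullet> (?Q *v x) = (?Q *v x) \<bullet> (Sigma *v (?Q *v x))"
    by (metis inner_commute)
  then show "x \<bullet> (?Q *v x) > 0" using pd[OF y0] by simp
qed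


definition Pm :: "('n::finite \<Rightarrow> 'b) \<Rightarrow> real^'n^'n \<Rightarrow> ('b \<Rightarrow> real) \<Rightarrow> real^'n^'n" where
  "Pm blk Q w = (\<chi> j k. if blk j = blk k then Q $ j $ k / w (blk k) else 0)"

definition blkv :: "('n::finite \<Rightarrow> 'b) \<Rightarrow> 'b \<Rightarrow> real^'n \<Rightarrow> real^'n" where
  "blkv blk b x = (\<chi> j. if blk j = b then x $ j else 0)"

lemma Pm_form:
  fixes Q :: "real^'n::finite^'n" and blk :: "'n \<Rightarrow> 'b::finite"
  shows "x \<bullet> (Pm blk Q w *v x) = (\<Sum>b\<in>UNIV. (1 / w b) * (blkv blk b x \<bullet> (Q *v blkv blk b x)))"
proof -
  have "x \<bullet> (Pm blk Q w *v x) = (\<Sum>j\<in>UNIV. \<Sum>k\<in>UNIV. (if blk j = blk k then x$j * Q$j$k * x$k / w (blk k) else 0))"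
    by (simp add: Pm_def inner_vec_def matrix_vector_mult_def sum_distrib_left) (intro sum.cong refl; simp)
  also have "\<dots> = (\<Sum>j\<in>UNIV. \<Sum>k\<in>UNIV. \<Sum>b\<in>UNIV. (if blk j = b \<and> blk k = b then x$j * Q$j$k * x$k / w b else 0))"
  proof (intro sum.cong refl)
    fix j k
    show "(if blk j = blk k then x$j * Q$j$k * x$k / w (blk k) else 0) = (\<Sum>b\<in>UNIV. (if blk j = b \<and> blk k = b then x$j * Q$j$k * x$k / w b else 0))"
    proof (cases "blk j = blk k")
      case True
      then show ?thesis by (simp add: sum.delta cong: conj_cong)
    next
      case False
      have "(\<Sum>b\<in>UNIV. (if blk j = b \<and> blk k = b then x$j * Q$j$k * x$k / w b else 0)) = 0"
        by (rule sum.neutral) (use False in auto)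
      with False show ?thesis by simp
    qed
  qed
  also have "\<dots> = (\<Sum>b\<in>UNIV. \<Sum>j\<in>UNIV. \<Sum>k\<in>UNIV. (if blk j = b \<and> blk k = b then x$j * Q$j$k * x$k / w b else 0))"
    apply (subst sum.swap) apply (rule sum.swap) done
  also have "\<dots> = (\<Sum>b\<in>UNIV. (1 / w b) * (blkv blk b x \<bullet> (Q *v blkv blk b x)))"
    by (intro sum.cong refl) (simp add: blkv_def inner_vec_def matrix_vector_mult_def sum_distrib_left, intro sum.cong refl, auto)
  finally show ?thesis .
qed


lemma Pm_pd:
  fixes Q :: "real^'n::finite^'n" and blk :: "'n \<Rightarrow> 'b::finite"
  assumes pd: "\<And>x. x \<noteq> 0 \<Longrightarrow> x \<bullet> (Q *v x) > 0"
    and wpos: "\<And>b. w b > 0" and x0: "x \<noteq> 0"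
  shows "x \<bullet> (Pm blk Q w *v x) > 0"
proof -
  have nn: "\<And>y. y \<bullet> (Q *v y) \<ge> 0"
    by (metis eq_iff inner_zero_left less_imp_le pd)
  obtain j where j: "x $ j \<noteq> 0" using x0 by (metis vec_eq_iff zero_index)
  have "blkv blk (blk j) x $ j \<noteq> 0" using j by (simp add: blkv_def)
  then have "blkv blk (blk j) x \<noteq> 0" by auto
  then have "(1 / w (blk j)) * (blkv blk (blk j) x \<bullet> (Q *v blkv blk (blk j) x)) > 0"
    using pd wpos by simp
  then show ?thesis unfolding Pm_form
    by (intro sum_pos2[of UNIV "blk j"]) (auto intro!: divide_nonneg_pos nn simp: wpos)
qed

lemma Pm_sym:
  fixes Q :: "real^'n::finite^'n"
  assumes "transpose Q = Q"
  shows "transpose (Pm blk Q w) = Pm blk Q w"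
proof -
  have "Q $ k $ j = Q $ j $ k" for j k using assms by (metis transpose_def vec_lambda_beta)
  then show ?thesis by (auto simp: Pm_def transpose_def vec_eq_iff)
qed

lemma B_Pm: "block_diag_part blk Q = Pm blk Q (\<lambda>_. 1)"
  by (simp add: block_diag_part_def Pm_def vec_eq_iff)

lemma diag_mult: "diag_mat a ** diag_mat b = diag_mat (\<lambda>j. a j * b j)"
proof -
  have "(\<Sum>k\<in>UNIV. (if i = k then a i else 0) * (if k = j then b k else 0)) = (if i = j then a i * b i else 0)" for i j
  proof -
    have "(\<Sum>k\<in>UNIV. (if i = k then a i else 0) * (if k = j then b k else 0)) = (\<Sum>k\<in>UNIV. if k = i then (if i = j then a i * b i else 0) else 0)"
      by (intro sum.cong) auto
    then show ?thesis by simp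
  qed
  then show ?thesis by (simp add: diag_mat_def matrix_matrix_mult_def vec_eq_iff)
qed

lemma diag_one: "diag_mat (\<lambda>_. 1) = mat 1"
  by (simp add: diag_mat_def mat_def)

lemma B_diag: "block_diag_part blk Q ** diag_mat (\<lambda>j. 1 / w (blk j)) = Pm blk Q w"
proof -
  have "(\<Sum>k\<in>UNIV. (if blk i = blk k then Q$i$k else 0) * (if k = j then 1 / w (blk k) else 0)) = (if blk i = blk j then Q$i$j / w (blk j) else 0)" for i j
  proof -
    have "(\<Sum>k\<in>UNIV. (if blk i = blk k then Q$i$k else 0) * (if k = j then 1 / w (blk k) else 0)) = (\<Sum>k\<in>UNIV. if k = j then (if blk i = blk j then Q$i$j / w (blk j) else 0) else 0)"
      by (intro sum.cong) auto
    then show ?thesis by simp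
  qed
  then show ?thesis by (simp add: block_diag_part_def Pm_def diag_mat_def matrix_matrix_mult_def vec_eq_iff)
qed


lemma quad_expand:
  fixes Q :: "real^'n::finite^'n"
  assumes "transpose Q = Q"
  shows "(v + t *\<^sub>R y) \<bullet> (Q *v (v + t *\<^sub>R y)) = v \<bullet> (Q *v v) + 2 * t * (y \<bullet> (Q *v v)) + t^2 * (y \<bullet> (Q *v y))"
proof -
  have s: "v \<bullet> (Q *v y) = y \<bullet> (Q *v v)" using sym_dot[OF assms] .
  show ?thesis
    by (simp add: matrix_vector_right_distrib matrix_vector_mult_scaleR inner_add_left inner_add_right s power2_eq_square algebra_simps)
qed

lemma geig_min:
  fixes Q P :: "real^'n::finite^'n"
  assumes symQ: "transpose Q = Q" and symP: "transpose P = P"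
    and pdQ: "\<And>x. x \<noteq> 0 \<Longrightarrow> x \<bullet> (Q *v x) > 0"
    and pdP: "\<And>x. x \<noteq> 0 \<Longrightarrow> x \<bullet> (P *v x) > 0"
  shows "\<exists>v l. v \<noteq> 0 \<and> Q *v v = l *\<^sub>R (P *v v) \<and> (\<forall>x. l * (x \<bullet> (P *v x)) \<le> x \<bullet> (Q *v x))"
proof -
  define R where "R x = (x \<bullet> (Q *v x)) / (x \<bullet> (P *v x))" for x :: "real^'n"
  have sne: "sphere (0::real^'n) 1 \<noteq> {}" by simp
  have cont: "continuous_on (sphere 0 1) R"
    unfolding R_def
    by (intro continuous_intros) (metis mem_sphere_0 norm_zero zero_neq_one pdP less_irrefl)
  obtain v where v: "v \<in> sphere 0 1" and vmin: "\<And>y. y \<in> sphere 0 1 \<Longrightarrow> R v \<le> R y"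
    using continuous_attains_inf[OF compact_sphere sne cont] by blast
  have v0: "v \<noteq> 0" using v by auto
  define l where "l = R v"
  have hom: "R (c *\<^sub>R x) = R x" if "c \<noteq> 0" for c x
    using that by (simp add: R_def matrix_vector_mult_scaleR)
  have key: "l * (x \<bullet> (P *v x)) \<le> x \<bullet> (Q *v x)" for x
  proof (cases "x = 0")
    case True then show ?thesis by simp
  next
    case False
    have "(1 / norm x) *\<^sub>R x \<in> sphere 0 1" using False by simp
    then have "l \<le> R x" using vmin[of "(1 / norm x) *\<^sub>R x"] hom[of "1 / norm x" x] False unfolding l_def by simp
    then show ?thesis using pdP[OF False] unfolding R_def by (simp add: pos_le_divide_eq)
  qed
  have lv: "v \<bullet> (Q *v v) = l * (v \<bullet> (P *v v))"
    using pdP[OF v0] unfolding l_def R_def by simp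
  define y where "y = Q *v v - l *\<^sub>R (P *v v)"
  define a where "a = y \<bullet> y"
  define c where "c = y \<bullet> (Q *v y) - l * (y \<bullet> (P *v y))"
  have c0: "c \<ge> 0" using key[of y] unfolding c_def by simp
  have F: "0 \<le> 2 * t * a + t^2 * c" for t
  proof -
    have "0 \<le> (v + t *\<^sub>R y) \<bullet> (Q *v (v + t *\<^sub>R y)) - l * ((v + t *\<^sub>R y) \<bullet> (P *v (v + t *\<^sub>R y)))"
      using key[of "v + t *\<^sub>R y"] by simp
    also have "\<dots> = 2 * t * a + t^2 * c"
      unfolding quad_expand[OF symQ] quad_expand[OF symP] a_def c_def
      by (simp add: lv y_def inner_diff_left inner_diff_right algebra_simps)
    finally show ?thesis .
  qed
  have "a = 0"
  proof (rule ccontr)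
    assume "a \<noteq> 0"
    then have a2: "a^2 > 0" by simp
    have c1: "c + 1 > 0" using c0 by simp
    have gen: "2 * (- a / d) * a + (- a / d)^2 * (d - 1) = (a^2 * (- (d - 1) - 2)) / d^2" if "d > 0" for d
      using that by (simp add: field_simps power2_eq_square)
    have "2 * (- a / (c+1)) * a + (- a / (c+1))^2 * c = (a^2 * (- c - 2)) / (c+1)^2"
      using gen[OF c1] by simp
    also have "\<dots> < 0"
      using a2 c0 c1 by (intro divide_neg_pos mult_pos_neg) auto
    finally show False using F[of "- a / (c+1)"] by simp
  qed
  then have "y = 0" unfolding a_def by simp
  then have "Q *v v = l *\<^sub>R (P *v v)" unfolding y_def by simp
  then show ?thesis using v0 key by blast
qed


definition geigs :: "real^'n::finite^'n \<Rightarrow> real^'n^'n \<Rightarrow> real set" where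
  "geigs Q P = {l. \<exists>v. v \<noteq> 0 \<and> Q *v v = l *\<^sub>R (P *v v)}"

lemma geig_orth:
  fixes Q P :: "real^'n::finite^'n"
  assumes symQ: "transpose Q = Q" and symP: "transpose P = P"
    and u: "Q *v u = l *\<^sub>R (P *v u)" and v: "Q *v v = m *\<^sub>R (P *v v)" and lm: "l \<noteq> m"
  shows "u \<bullet> (P *v v) = 0"
proof -
  have e1: "u \<bullet> (Q *v v) = m * (u \<bullet> (P *v v))" using v by simp
  have e2: "v \<bullet> (Q *v u) = l * (v \<bullet> (P *v u))" using u by simp
  have e3: "u \<bullet> (Q *v v) = v \<bullet> (Q *v u)" using sym_dot[OF symQ] .
  have e4: "u \<bullet> (P *v v) = v \<bullet> (P *v u)" using sym_dot[OF symP] .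
  have "m * (u \<bullet> (P *v v)) = l * (u \<bullet> (P *v v))" by (metis e1 e2 e3 e4)
  then have "(m - l) * (u \<bullet> (P *v v)) = 0" by (simp add: left_diff_distrib)
  then show ?thesis using lm by simp
qed

lemma geigs_finite:
  fixes Q P :: "real^'n::finite^'n"
  assumes symQ: "transpose Q = Q" and symP: "transpose P = P"
    and pdP: "\<And>x. x \<noteq> 0 \<Longrightarrow> x \<bullet> (P *v x) > 0"
  shows "finite (geigs Q P)"
proof (rule ccontr)
  assume "infinite (geigs Q P)"
  then obtain F where F: "finite F" "card F = CARD('n) + 1" "F \<subseteq> geigs Q P"
    using infinite_arbitrarily_large by blast
  define ev where "ev l = (SOME v. v \<noteq> 0 \<and> Q *v v = l *\<^sub>R (P *v v))" for l
  have evp: "ev l \<noteq> 0 \<and> Q *v ev l = l *\<^sub>R (P *v ev l)" if "l \<in> geigs Q P" for l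
  proof -
    have "\<exists>v. v \<noteq> 0 \<and> Q *v v = l *\<^sub>R (P *v v)" using that by (simp add: geigs_def)
    from someI_ex[OF this] show ?thesis by (simp add: ev_def)
  qed
  have inj: "inj_on ev F"
  proof (rule inj_onI)
    fix l m assume lm: "l \<in> F" "m \<in> F" "ev l = ev m"
    show "l = m"
    proof (rule ccontr)
      assume "l \<noteq> m"
      then have "ev l \<bullet> (P *v ev m) = 0"
        using geig_orth[OF symQ symP] evp lm F(3) by blast
      then show False using pdP evp lm F(3) by (metis less_irrefl subsetD)
    qed
  qed
  have orth: "x \<bullet> (P *v y) = 0" if xy: "x \<in> ev ` F" "y \<in> ev ` F" "x \<noteq> y" for x y
  proof -
    obtain l m where "l \<in> F" "m \<in> F" "x = ev l" "y = ev m" using xy by auto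
    then show ?thesis using xy geig_orth[OF symQ symP] evp F(3) by (metis subsetD)
  qed
  have nz: "x \<bullet> (P *v x) > 0" if "x \<in> ev ` F" for x
    using that evp F(3) pdP by auto
  have ind: "independent (ev ` F)"
  proof (rule real_vector.independent_if_scalars_zero)
    show "finite (ev ` F)" using F by simp
    fix f x assume s: "(\<Sum>x\<in>ev ` F. f x *\<^sub>R x) = 0" and x: "x \<in> ev ` F"
    have "0 = (\<Sum>y\<in>ev ` F. f y *\<^sub>R y) \<bullet> (P *v x)" using s by simp
    also have "\<dots> = (\<Sum>y\<in>ev ` F. f y * (y \<bullet> (P *v x)))" by (simp add: inner_sum_left)
    also have "\<dots> = (\<Sum>y\<in>ev ` F. if y = x then f x * (x \<bullet> (P *v x)) else 0)"
      by (intro sum.cong refl) (auto simp: orth x)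
    also have "\<dots> = f x * (x \<bullet> (P *v x))" using F x by simp
    finally show "f x = 0" using nz[OF x] by simp
  qed
  have "card (ev ` F) \<le> DIM(real^'n)" using independent_bound[OF ind] by simp
  then show False using card_image[OF inj] F(2) by simp
qed

lemma geigs_pos:
  fixes Q P :: "real^'n::finite^'n"
  assumes pdQ: "\<And>x. x \<noteq> 0 \<Longrightarrow> x \<bullet> (Q *v x) > 0"
    and pdP: "\<And>x. x \<noteq> 0 \<Longrightarrow> x \<bullet> (P *v x) > 0"
    and l: "l \<in> geigs Q P"
  shows "l > 0"
proof -
  obtain v where v: "v \<noteq> 0" "Q *v v = l *\<^sub>R (P *v v)" using l unfolding geigs_def by auto
  have "v \<bullet> (Q *v v) = l * (v \<bullet> (P *v v))" using v by simp
  then show ?thesis using pdQ[OF v(1)] pdP[OF v(1)] by (simp add: zero_less_mult_iff)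
qed

lemma geigs_Min:
  fixes Q P :: "real^'n::finite^'n"
  assumes symQ: "transpose Q = Q" and symP: "transpose P = P"
    and pdQ: "\<And>x. x \<noteq> 0 \<Longrightarrow> x \<bullet> (Q *v x) > 0"
    and pdP: "\<And>x. x \<noteq> 0 \<Longrightarrow> x \<bullet> (P *v x) > 0"
  shows "finite (geigs Q P)" "geigs Q P \<noteq> {}" "Min (geigs Q P) > 0"
proof -
  show fin: "finite (geigs Q P)" using geigs_finite assms by blast
  obtain v l where "v \<noteq> 0" "Q *v v = l *\<^sub>R (P *v v)"
    using geig_min[OF assms] by blast
  then show ne: "geigs Q P \<noteq> {}" unfolding geigs_def by blast
  have "Min (geigs Q P) \<in> geigs Q P" using Min_in[OF fin ne] .
  then show "Min (geigs Q P) > 0" using geigs_pos pdQ pdP by blast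
qed


definition eigs :: "real^'n::finite^'n \<Rightarrow> real set" where
  "eigs A = {l. \<exists>v. v \<noteq> 0 \<and> A *v v = l *\<^sub>R v}"

lemma lambda_min_eigs: "lambda_min A = Min (eigs A)"
  by (simp add: lambda_min_def eigs_def)

lemma eigs_Dmat:
  fixes Q :: "real^'n::finite^'n" and blk :: "'n \<Rightarrow> 'b::finite"
  assumes symQ: "transpose Q = Q"
    and pdQ: "\<And>x. x \<noteq> 0 \<Longrightarrow> x \<bullet> (Q *v x) > 0"
    and wpos: "\<And>b. w b > 0"
  shows "eigs (Dmat blk Q w ** Q) = geigs Q (Pm blk Q w)"
proof -
  let ?B = "block_diag_part blk Q"
  let ?d = "diag_mat (\<lambda>j. w (blk j))"
  let ?di = "diag_mat (\<lambda>j. 1 / w (blk j))"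
  let ?P = "Pm blk Q w"
  let ?D = "Dmat blk Q w"
  have "invertible ?B" unfolding B_Pm
    by (rule pd_invertible, rule Pm_pd[OF pdQ]) auto
  note ib = inv_props[OF this]
  have dd1: "?di ** ?d = mat 1" "?d ** ?di = mat 1"
    using wpos by (simp_all add: diag_mult diag_one[symmetric] less_imp_neq[symmetric])
  have PD: "?P ** ?D = mat 1"
  proof -
    have "?P ** ?D = ?B ** (?di ** ?d) ** matrix_inv ?B"
      by (simp add: B_diag[symmetric] Dmat_def matrix_mul_assoc)
    then show ?thesis using dd1 ib by simp
  qed
  have DP: "?D ** ?P = mat 1"
  proof -
    have "?D ** ?P = ?d ** (matrix_inv ?B ** ?B) ** ?di"
      by (simp add: B_diag[symmetric] Dmat_def matrix_mul_assoc)
    then show ?thesis using dd1 ib by simp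
  qed
  have "(?D ** Q) *v v = l *\<^sub>R v \<longleftrightarrow> Q *v v = l *\<^sub>R (?P *v v)" for v l
  proof
    assume h: "(?D ** Q) *v v = l *\<^sub>R v"
    have "Q *v v = ?P *v (?D *v (Q *v v))" by (metis PD matrix_vector_mul_assoc matrix_vector_mul_lid)
    also have "\<dots> = l *\<^sub>R (?P *v v)" using h by (simp add: matrix_vector_mul_assoc[symmetric] matrix_vector_mult_scaleR)
    finally show "Q *v v = l *\<^sub>R (?P *v v)" .
  next
    assume h: "Q *v v = l *\<^sub>R (?P *v v)"
    have "(?D ** Q) *v v = ?D *v (Q *v v)" by (simp add: matrix_vector_mul_assoc)
    also have "\<dots> = l *\<^sub>R v" using h by (simp add: matrix_vector_mult_scaleR matrix_vector_mul_assoc DP)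
    finally show "(?D ** Q) *v v = l *\<^sub>R v" .
  qed
  then show ?thesis unfolding eigs_def geigs_def by blast
qed

lemma Pm_scale: "c \<noteq> 0 \<Longrightarrow> Pm blk Q (\<lambda>b. c * w b) = (1 / c) *\<^sub>R Pm blk Q w"
  by (simp add: Pm_def vec_eq_iff)

lemma geigs_scale:
  fixes Q P :: "real^'n::finite^'n"
  assumes "c > 0"
  shows "geigs Q ((1 / c) *\<^sub>R P) = (\<lambda>l. c * l) ` geigs Q P"
proof -
  have eq: "Q *v v = l *\<^sub>R ((1 / c) *\<^sub>R P *v v) \<longleftrightarrow> Q *v v = (l / c) *\<^sub>R (P *v v)" for v l
    by (simp add: scaleR_matrix_vector_assoc)
  show ?thesis
  proof (rule set_eqI)
    fix m
    show "m \<in> geigs Q ((1 / c) *\<^sub>R P) \<longleftrightarrow> m \<in> (\<lambda>l. c * l) ` geigs Q P"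
    proof
      assume "m \<in> geigs Q ((1 / c) *\<^sub>R P)"
      then have "m / c \<in> geigs Q P" unfolding geigs_def using eq by auto
      moreover have "m = c * (m / c)" using assms by simp
      ultimately show "m \<in> (\<lambda>l. c * l) ` geigs Q P" by blast
    next
      assume "m \<in> (\<lambda>l. c * l) ` geigs Q P"
      then obtain l where l: "l \<in> geigs Q P" "m = c * l" by blast
      have "m / c = l" using l assms by simp
      then show "m \<in> geigs Q ((1 / c) *\<^sub>R P)" using l(1) eq unfolding geigs_def by auto
    qed
  qed
qed


lemma sum_option: "sum f (UNIV :: 'a::finite option set) = f None + (\<Sum>a\<in>UNIV. f (Some a))"
proof -
  have "sum f (UNIV :: 'a option set) = sum f (insert None (range Some))"
    by (metis UNIV_option_conv)
  also have "\<dots> = f None + sum f (range Some)" by (rule sum.insert) auto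
  also have "sum f (range Some) = (\<Sum>a\<in>UNIV. f (Some a))"
    by (simp add: sum.reindex)
  finally show ?thesis .
qed

lemma Qext_mv:
  fixes Q :: "real^'n::finite^'n"
  shows "(Qext Q *v v) $ Some a = (Q *v (\<chi> c. v $ Some c)) $ a" "(Qext Q *v v) $ None = v $ None"
  by (simp_all add: Qext_def matrix_vector_mult_def sum_option)

lemma Dext_mv:
  fixes Q :: "real^'n::finite^'n" and blk :: "'n \<Rightarrow> 'b::finite"
  shows "(Dext blk Q w *v v) $ Some a = (Dmat blk Q w *v (\<chi> c. v $ Some c)) $ a"
    "(Dext blk Q w *v v) $ None = (1 - (\<Sum>i\<in>UNIV. w i)) * v $ None"
  by (simp_all add: Dext_def matrix_vector_mult_def sum_option)

lemma eigs_ext: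
  fixes Q :: "real^'n::finite^'n" and blk :: "'n \<Rightarrow> 'b::finite"
  shows "eigs (Dext blk Q w ** Qext Q) = insert (1 - (\<Sum>i\<in>UNIV. w i)) (eigs (Dmat blk Q w ** Q))"
proof -
  define s where "s = 1 - (\<Sum>i\<in>UNIV. w i)"
  let ?M = "Dmat blk Q w ** Q"
  let ?N = "Dext blk Q w ** Qext Q"
  define vs where "vs v = (\<chi> c. v $ Some c)" for v :: "real^('n option)"
  have vsQ: "vs (Qext Q *v v) = Q *v vs v" for v
    by (simp add: vs_def vec_eq_iff Qext_mv)
  have N1: "(?N *v v) $ Some a = (?M *v vs v) $ a" for v a
    by (simp add: matrix_vector_mul_assoc[symmetric] Dext_mv vs_def[symmetric] vsQ)
  have N2: "(?N *v v) $ None = s * v $ None" for v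
    by (simp add: matrix_vector_mul_assoc[symmetric] Dext_mv s_def Qext_mv)
  have eqv: "?N *v v = l *\<^sub>R v \<longleftrightarrow> ?M *v vs v = l *\<^sub>R vs v \<and> s * v $ None = l * v $ None" for v l
  proof
    assume h: "?N *v v = l *\<^sub>R v"
    have "?M *v vs v = l *\<^sub>R vs v"
      unfolding vec_eq_iff
    proof
      fix a show "(?M *v vs v) $ a = (l *\<^sub>R vs v) $ a" using N1[of v a] h by (simp add: vs_def)
    qed
    moreover have "(?N *v v) $ None = (l *\<^sub>R v) $ None" using h by (simp only:)
    then have "s * v $ None = l * v $ None" unfolding N2 by simp
    ultimately show "?M *v vs v = l *\<^sub>R vs v \<and> s * v $ None = l * v $ None" by blast
  next
    assume h: "?M *v vs v = l *\<^sub>R vs v \<and> s * v $ None = l * v $ None"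
    show "?N *v v = l *\<^sub>R v" unfolding vec_eq_iff
    proof
      fix i show "(?N *v v) $ i = (l *\<^sub>R v) $ i"
      proof (cases i)
        case None then show ?thesis using N2[of v] h by simp
      next
        case (Some a) then show ?thesis using N1[of v a] h by (simp add: vs_def vec_eq_iff)
      qed
    qed
  qed
  have "eigs ?N = insert s (eigs ?M)"
  proof (rule set_eqI)
    fix l
    show "l \<in> eigs ?N \<longleftrightarrow> l \<in> insert s (eigs ?M)"
    proof
      assume "l \<in> eigs ?N"
      then obtain v where v: "v \<noteq> 0" "?N *v v = l *\<^sub>R v" unfolding eigs_def by auto
      show "l \<in> insert s (eigs ?M)"
      proof (cases "vs v = 0")
        case False then show ?thesis using v eqv unfolding eigs_def by blast
      next
        case True
        have "v $ None \<noteq> 0"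
        proof
          assume "v $ None = 0"
          then have "v = 0" using True unfolding vs_def vec_eq_iff by (metis option.exhaust vec_lambda_beta zero_index)
          then show False using v by simp
        qed
        then show ?thesis using v eqv by simp
      qed
    next
      assume "l \<in> insert s (eigs ?M)"
      then show "l \<in> eigs ?N"
      proof
        assume ls: "l = s"
        define v :: "real^('n option)" where "v = (\<chi> i. if i = None then 1 else 0)"
        have "vs v = 0" by (simp add: vs_def v_def vec_eq_iff)
        moreover have "v \<noteq> 0" by (simp add: v_def vec_eq_iff)
        ultimately show ?thesis using eqv[of v l] ls unfolding eigs_def by (auto simp: v_def)
      next
        assume "l \<in> eigs ?M"
        then obtain u where u: "u \<noteq> 0" "?M *v u = l *\<^sub>R u" unfolding eigs_def by auto
        define v :: "real^('n option)" where "v = (\<chi> i. case i of None \<Rightarrow> 0 | Some c \<Rightarrow> u $ c)"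
        have "vs v = u" by (simp add: vs_def v_def vec_eq_iff)
        moreover have "vs 0 = 0" by (simp add: vs_def vec_eq_iff)
        then have "v \<noteq> 0" using u(1) \<open>vs v = u\<close> by metis
        ultimately show ?thesis using eqv[of v l] u by (auto simp: eigs_def v_def)
      qed
    qed
  qed
  then show ?thesis unfolding s_def .
qed


lemma g_props:
  fixes Q :: "real^'n::finite^'n" and blk :: "'n \<Rightarrow> 'b::finite"
  assumes symQ: "transpose Q = Q"
    and pdQ: "\<And>x. x \<noteq> 0 \<Longrightarrow> x \<bullet> (Q *v x) > 0"
    and wpos: "\<And>b. w b > 0"
  shows "lambda_min (Dmat blk Q w ** Q) = Min (geigs Q (Pm blk Q w))"
    "finite (geigs Q (Pm blk Q w))" "geigs Q (Pm blk Q w) \<noteq> {}"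
    "Min (geigs Q (Pm blk Q w)) > 0"
    "fext blk Q w = min (1 - (\<Sum>i\<in>UNIV. w i)) (Min (geigs Q (Pm blk Q w)))"
proof -
  note G = geigs_Min[OF symQ Pm_sym[where blk=blk and w=w, OF symQ] pdQ Pm_pd[where blk=blk, OF pdQ wpos]]
  show l: "lambda_min (Dmat blk Q w ** Q) = Min (geigs Q (Pm blk Q w))"
    by (simp add: lambda_min_eigs eigs_Dmat[OF symQ pdQ wpos])
  show "finite (geigs Q (Pm blk Q w))" "geigs Q (Pm blk Q w) \<noteq> {}"
    "Min (geigs Q (Pm blk Q w)) > 0" using G by auto
  show "fext blk Q w = min (1 - (\<Sum>i\<in>UNIV. w i)) (Min (geigs Q (Pm blk Q w)))"
    unfolding fext_def lambda_min_eigs eigs_ext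
    using G by (simp add: Min_insert eigs_Dmat[OF symQ pdQ wpos])
qed

lemma g_scale:
  fixes Q :: "real^'n::finite^'n" and blk :: "'n \<Rightarrow> 'b::finite"
  assumes symQ: "transpose Q = Q"
    and pdQ: "\<And>x. x \<noteq> 0 \<Longrightarrow> x \<bullet> (Q *v x) > 0"
    and wpos: "\<And>b. w b > 0" and c: "c > 0"
  shows "Min (geigs Q (Pm blk Q (\<lambda>b. c * w b))) = c * Min (geigs Q (Pm blk Q w))"
proof -
  have P: "Pm blk Q (\<lambda>b. c * w b) = (1 / c) *\<^sub>R Pm blk Q w"
    using Pm_scale[of c blk Q w] less_imp_neq[OF c] by argo
  have e: "geigs Q (Pm blk Q (\<lambda>b. c * w b)) = (\<lambda>l. c * l) ` geigs Q (Pm blk Q w)"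
    unfolding P by (rule geigs_scale[OF c])
  have m: "mono (\<lambda>l::real. c * l)" using c by (simp add: mono_def)
  have "c * Min (geigs Q (Pm blk Q w)) = Min ((\<lambda>l. c * l) ` geigs Q (Pm blk Q w))"
    by (rule mono_Min_commute[OF m g_props(2,3)[OF symQ pdQ wpos]])
  then show ?thesis unfolding e by simp
qed


theorem proposition2:
  fixes Sigma :: "real^'n::finite^'n"
    and blk :: "'n \<Rightarrow> 'b::finite"
    and wstar :: "'b \<Rightarrow> real"
  assumes blk_surj: "surj blk"
    and Sigma_sym: "transpose Sigma = Sigma"
    and Sigma_pd: "\<And>x. x \<noteq> 0 \<Longrightarrow> x \<bullet> (Sigma *v x) > 0"
    and wstar_in: "wstar \<in> open_simplex"
    and wstar_max: "\<And>w. w \<in> open_simplex \<Longrightarrow>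
                        fext blk (matrix_inv Sigma) w \<le> fext blk (matrix_inv Sigma) wstar"
  shows "(\<lambda>j. wstar j / (\<Sum>i\<in>UNIV. wstar i)) \<in> pos_prob_vectors
    \<and> (\<forall>p\<in>pos_prob_vectors. PG blk (matrix_inv Sigma) p
          \<le> PG blk (matrix_inv Sigma) (\<lambda>j. wstar j / (\<Sum>i\<in>UNIV. wstar i)))
    \<and> PG blk (matrix_inv Sigma) (\<lambda>j. wstar j / (\<Sum>i\<in>UNIV. wstar i))
        = fext blk (matrix_inv Sigma) wstar / (\<Sum>i\<in>UNIV. wstar i)"
proof -
  define Q where "Q = matrix_inv Sigma"
  have symQ: "transpose Q = Q" and pdQ: "\<And>x. x \<noteq> 0 \<Longrightarrow> x \<bullet> (Q *v x) > 0"
    using Q_props[OF Sigma_sym Sigma_pd] unfolding Q_def by auto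
  define g where "g w = Min (geigs Q (Pm blk Q w))" for w
  have gp: "PG blk Q w = g w" "g w > 0" "fext blk Q w = min (1 - (\<Sum>i\<in>UNIV. w i)) (g w)"
    if "\<And>b. w b > 0" for w
    using g_props[OF symQ pdQ that, of blk] unfolding g_def PG_def by auto
  have gs: "g (\<lambda>b. c * w b) = c * g w" if "\<And>b. w b > 0" "c > 0" for w c
    using g_scale[OF symQ pdQ that] unfolding g_def by simp
  have ws_pos: "\<And>i. wstar i > 0" and t1: "1 - (\<Sum>i\<in>UNIV. wstar i) > 0"
    using wstar_in unfolding open_simplex_def by auto
  define t where "t = (\<Sum>i\<in>UNIV. wstar i)"
  have tpos: "t > 0" unfolding t_def using ws_pos by (intro sum_pos) auto
  define ps where "ps = (\<lambda>j. wstar j / t)"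
  have ps_pos: "\<And>j. ps j > 0" unfolding ps_def using ws_pos tpos by simp
  have ps_sum: "(\<Sum>i\<in>UNIV. ps i) = 1" unfolding ps_def using tpos
    by (simp add: sum_divide_distrib[symmetric] t_def)
  have ps_in: "ps \<in> pos_prob_vectors" unfolding pos_prob_vectors_def using ps_pos ps_sum by auto
  have ws_eq: "wstar = (\<lambda>b. t * ps b)" unfolding ps_def using tpos by auto
  define gs0 where "gs0 = g ps"
  have gs0_pos: "gs0 > 0" unfolding gs0_def using gp(2)[OF ps_pos] .
  have f_ws: "fext blk Q wstar = min (1 - t) (t * gs0)"
  proof -
    have "g wstar = t * gs0" unfolding gs0_def ws_eq using gs[OF ps_pos tpos] .
    then show ?thesis using gp(3)[OF ws_pos] unfolding t_def by simp
  qed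
  have key: "g p / (1 + g p) \<le> min (1 - t) (t * gs0)" if p: "p \<in> pos_prob_vectors" for p
  proof -
    have ppos: "\<And>b. p b > 0" and psum: "(\<Sum>i\<in>UNIV. p i) = 1"
      using p unfolding pos_prob_vectors_def by auto
    define gq where "gq = g p"
    have gq: "gq > 0" unfolding gq_def using gp(2)[OF ppos] .
    define c where "c = 1 / (1 + gq)"
    have c: "c > 0" "c < 1" using gq unfolding c_def by auto
    define w where "w = (\<lambda>b. c * p b)"
    have wpos: "\<And>b. w b > 0" unfolding w_def using c ppos by simp
    have wsum: "(\<Sum>i\<in>UNIV. w i) = c" unfolding w_def using psum by (simp add: sum_distrib_left[symmetric])
    have win: "w \<in> open_simplex" unfolding open_simplex_def using wpos wsum c by auto
    have gw: "g w = c * gq" unfolding w_def gq_def using gs[OF ppos c(1)] .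
    have e1: "1 - c = gq / (1 + gq)" unfolding c_def using gq by (simp add: field_simps)
    have e2: "c * gq = gq / (1 + gq)" unfolding c_def by simp
    have "fext blk Q w = gq / (1 + gq)" using gp(3)[OF wpos] wsum gw e1 e2 by simp
    then show ?thesis using wstar_max[OF win] f_ws unfolding Q_def gq_def by simp
  qed
  have k0: "gs0 / (1 + gs0) \<le> 1 - t" "gs0 / (1 + gs0) \<le> t * gs0"
    using key[OF ps_in] unfolding gs0_def by auto
  have "t * (1 + gs0) \<le> 1" using k0(1) gs0_pos by (simp add: field_simps)
  moreover have "1 \<le> t * (1 + gs0)"
  proof -
    have "gs0 * 1 \<le> gs0 * (t * (1 + gs0))" using k0(2) gs0_pos by (simp add: field_simps)
    then show ?thesis using gs0_pos by (simp only: mult_le_cancel_left_pos)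
  qed
  ultimately have teq: "t * (1 + gs0) = 1" by simp
  have f_ws2: "fext blk Q wstar = t * gs0" using f_ws teq by (simp add: algebra_simps)
  have r3: "PG blk Q ps = fext blk Q wstar / t" using f_ws2 tpos gp(1)[OF ps_pos] unfolding gs0_def by simp
  have r2: "PG blk Q p \<le> PG blk Q ps" if p: "p \<in> pos_prob_vectors" for p
  proof -
    have ppos: "\<And>b. p b > 0" using p unfolding pos_prob_vectors_def by auto
    have gq: "g p > 0" using gp(2)[OF ppos] .
    have "g p / (1 + g p) \<le> t * gs0" using key[OF p] by simp
    also have "t * gs0 = gs0 / (1 + gs0)" using teq gs0_pos by (simp add: field_simps)
    finally have "g p / (1 + g p) \<le> gs0 / (1 + gs0)" .
    then have "g p * (1 + gs0) \<le> gs0 * (1 + g p)" using gq gs0_pos by (simp add: field_simps)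
    then have "g p \<le> gs0" by (simp add: algebra_simps)
    then show ?thesis using gp(1)[OF ppos] gp(1)[OF ps_pos] unfolding gs0_def by simp
  qed
  show ?thesis using ps_in r2 r3 unfolding ps_def t_def Q_def by auto
qed

end
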